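(* Let $H\in\mathbb{R}^{N\times n}$ with $H^TH$ symmetric positive semidefinite (possibly singular), and let $R\in\mathbb{R}^{n\times n}$ be symmetric positive definite. Define $F(R)=H^TH(H^TH+R)^{-1}$, and for each integer $c\ge0$ define $$F_{aim}(H,R,c)=(H^TH+R)^{-1}\sum_{i=0}^cF(R)^i,\qquad F_{ar}(R)=(H^TH)^{\dagger}-F_{aim}(H,R,c).$$ Then $$\lim_{c\to+\infty}F_{ar}(R)=(H^TH)^{\dagger}-R^{-1}.$$
   Context: $(H^TH)^{\dagger}$ denotes the Moore–Penrose pseudo-inverse of $H^TH$. *)

theory Defs
  imports "HOL-Analysis.Analysis"
begin

primrec mat_pow :: "'a::comm_ring_1^'n^'n \<Rightarrow> nat \<Rightarrow> 'a^'n^'n" where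
  "mat_pow A 0 = mat 1"
| "mat_pow A (Suc k) = A ** mat_pow A k"

definition moore_penrose_pinv :: "real^'n^'m \<Rightarrow> real^'m^'n" where
  "moore_penrose_pinv A = (THE X. A ** X ** A = A \<and> X ** A ** X = X \<and>
       transpose (A ** X) = A ** X \<and> transpose (X ** A) = X ** A)"

definition sym_psd :: "real^'n^'n \<Rightarrow> bool" where
  "sym_psd A \<longleftrightarrow> transpose A = A \<and> (\<forall>x. 0 \<le> x \<bullet> (A *v x))"

definition sym_pd :: "real^'n^'n \<Rightarrow> bool" where
  "sym_pd A \<longleftrightarrow> transpose A = A \<and> (\<forall>x. x \<noteq> 0 \<longrightarrow> 0 < x \<bullet> (A *v x))"

end

theory Submission
  imports Defs
begin

lemma mm_rdistrib: "((A::real^'n^'m) + B) ** (C::real^'p^'n) = A ** C + B ** C"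
  by (simp add: matrix_matrix_mult_def vec_eq_iff sum.distrib ring_distribs)
lemma mm_ldiff: "(A::real^'n^'m) ** ((B::real^'p^'n) - C) = A ** B - A ** C"
  by (simp add: matrix_matrix_mult_def vec_eq_iff sum_subtractf ring_distribs)
lemma mm_rdiff: "((A::real^'n^'m) - B) ** (C::real^'p^'n) = A ** C - B ** C"
  by (simp add: matrix_matrix_mult_def vec_eq_iff sum_subtractf ring_distribs)
lemma transpose_add': "transpose ((A::real^'n^'m) + B) = transpose A + transpose B"
  by (simp add: transpose_def vec_eq_iff)

lemma inv_props:
  assumes "invertible (A::real^'n^'n)"
  shows "A ** matrix_inv A = mat 1" "matrix_inv A ** A = mat 1"
  using someI_ex[OF assms[unfolded invertible_def]] unfolding matrix_inv_def by auto

lemma sym_inner: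
  assumes "transpose (S::real^'n^'n) = S"
  shows "u \<bullet> (S *v v) = v \<bullet> (S *v u)"
proof -
  have "u \<bullet> (S *v v) = (u v* S) \<bullet> v" by (simp add: dot_lmul_matrix)
  also have "u v* S = S *v u" using vector_transpose_matrix[of u S] assms by simp
  finally show ?thesis by (simp add: inner_commute)
qed

lemma pd_invertible:
  assumes "sym_pd (S::real^'n^'n)" shows "invertible S"
proof -
  have "\<forall>x. S *v x = 0 \<longrightarrow> x = 0"
    using assms unfolding sym_pd_def by (metis inner_zero_right less_irrefl)
  then show ?thesis using matrix_left_invertible_ker invertible_left_inverse by blast
qed

lemma pd_lower:
  assumes "sym_pd (S::real^'n^'n)"
  obtains c where "c > 0" "\<And>x. c * norm x ^ 2 \<le> x \<bullet> (S *v x)"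
proof -
  have cont: "continuous_on (sphere 0 1) (\<lambda>x::real^'n. x \<bullet> (S *v x))"
    by (intro continuous_intros linear_continuous_on matrix_vector_mul_bounded_linear)
  obtain u where u: "u \<in> sphere 0 1" "\<And>y. y \<in> sphere 0 1 \<Longrightarrow> u \<bullet> (S *v u) \<le> y \<bullet> (S *v y)"
    using continuous_attains_inf[OF compact_sphere _ cont] by auto
  have "u \<noteq> 0" using u(1) by auto
  hence cpos: "u \<bullet> (S *v u) > 0" using assms unfolding sym_pd_def by auto
  have "u \<bullet> (S *v u) * norm x ^ 2 \<le> x \<bullet> (S *v x)" for x
  proof (cases "x = 0")
    case True then show ?thesis by simp
  next
    case False
    define v where "v = (1 / norm x) *\<^sub>R x"
    have "v \<in> sphere 0 1" using False by (simp add: v_def)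
    hence "u \<bullet> (S *v u) \<le> v \<bullet> (S *v v)" using u(2) by auto
    moreover have "x = norm x *\<^sub>R v" using False by (simp add: v_def)
    hence "x \<bullet> (S *v x) = norm x ^ 2 * (v \<bullet> (S *v v))"
      by (metis inner_scaleR_left inner_scaleR_right matrix_vector_mult_scaleR mult.assoc power2_eq_square)
    ultimately show ?thesis by (simp add: mult.commute mult_right_mono)
  qed
  then show ?thesis using that cpos by blast
qed

lemma pd_upper:
  obtains K where "K > 0" "\<And>x. x \<bullet> ((S::real^'n^'n) *v x) \<le> K * norm x ^ 2"
proof -
  obtain K where K: "K > 0" "\<And>x. norm (S *v x) \<le> norm x * K"
    using bounded_linear.pos_bounded[OF matrix_vector_mul_bounded_linear[of S]] by blast
  have "x \<bullet> (S *v x) \<le> K * norm x ^ 2" for x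
  proof -
    have "x \<bullet> (S *v x) \<le> norm x * norm (S *v x)" by (rule norm_cauchy_schwarz)
    also have "\<dots> \<le> norm x * (norm x * K)" using K(2) by (simp add: mult_left_mono)
    finally show ?thesis by (simp add: power2_eq_square algebra_simps)
  qed
  then show ?thesis using that K by blast
qed

lemma mat_tendsto_mult:
  assumes "(X \<longlongrightarrow> 0) F"
  shows "((\<lambda>c. (K::real^'n^'m) ** (X c :: real^'p^'n) ** (L::real^'q^'p)) \<longlongrightarrow> 0) F"
proof (rule vec_tendstoI, rule vec_tendstoI)
  fix i j
  have X: "((\<lambda>c. X c $ k $ l) \<longlongrightarrow> 0) F" for k l
    using tendsto_vec_nth[OF tendsto_vec_nth[OF assms]] by simp
  show "((\<lambda>c. (K ** X c ** L) $ i $ j) \<longlongrightarrow> 0 $ i $ j) F"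
    unfolding matrix_matrix_mult_def
    by (simp, intro tendsto_null_sum tendsto_mult_right_zero tendsto_mult_left_zero X)
qed


lemma mat_pow_Suc_vec: "mat_pow G (Suc k) *v x = G *v (mat_pow G k *v x)"
  by (simp add: matrix_vector_mul_assoc)

lemma pow_tendsto_zero:
  fixes A R :: "real^'n^'n"
  assumes A: "sym_psd A" and R: "sym_pd R"
  defines "M \<equiv> A + R"
  defines "G \<equiv> matrix_inv M ** A"
  shows "(\<lambda>k. mat_pow G k) \<longlonglongrightarrow> 0"
proof -
  have Msym: "sym_pd M" using A R unfolding M_def sym_pd_def sym_psd_def
    by (auto simp: transpose_add' matrix_vector_mult_add_rdistrib inner_add_right add_nonneg_pos)
  have Minv: "invertible M" by (rule pd_invertible[OF Msym])
  have Rinv: "invertible R" by (rule pd_invertible[OF R])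
  define Mi where "Mi = matrix_inv M"
  define Ri where "Ri = matrix_inv R"
  note MMi = inv_props[OF Minv, folded Mi_def]
  note RRi = inv_props[OF Rinv, folded Ri_def]
  define Q where "Q x = x \<bullet> (M *v x)" for x
  obtain c where c: "c > 0" "\<And>x. c * norm x ^ 2 \<le> Q x"
    using pd_lower[OF Msym] unfolding Q_def by blast
  obtain K where K: "K > 0" "\<And>x. Q x \<le> K * norm x ^ 2"
    using pd_upper unfolding Q_def by blast
  have Qnn: "Q x \<ge> 0" for x using c(2)[of x] c(1) by (smt (verit) zero_le_power2 mult_nonneg_nonneg)
  have IG: "mat 1 - G = Mi ** R"
  proof -
    have "Mi ** R = Mi ** (M - A)" by (simp add: M_def)
    also have "\<dots> = mat 1 - G" unfolding G_def Mi_def[symmetric] by (simp add: mm_ldiff MMi)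
    finally show ?thesis by simp
  qed
  have injz: "inj ((*v) (Mi ** R))"
  proof -
    have "(Ri ** M) ** (Mi ** R) = mat 1"
      by (metis MMi(1) RRi(2) matrix_mul_assoc matrix_mul_lid)
    then show ?thesis by (metis inj_on_inverseI matrix_vector_mul_assoc matrix_vector_mul_lid)
  qed
  obtain b where b: "b > 0" "\<And>x. b * norm x \<le> norm ((Mi ** R) *v x)"
    using linear_inj_bounded_below_pos[OF matrix_vector_mul_linear injz] by blast
  define mu where "mu = c * b^2 / K"
  have mu: "mu > 0" using c b K by (simp add: mu_def)
  define lam where "lam = max 0 (1 - mu)"
  have lam: "0 \<le> lam" "lam < 1" using mu by (auto simp: lam_def)
  have step: "Q (G *v x) \<le> lam * Q x" for x
  proof -
    define y where "y = G *v x"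
    define z where "z = x - y"
    have My: "M *v y = A *v x" unfolding y_def G_def
      by (simp add: matrix_vector_mul_assoc matrix_mul_assoc MMi(1) flip: Mi_def)
    have Az: "A *v z = R *v y"
      using My unfolding z_def M_def by (simp add: matrix_vector_mult_diff_distrib matrix_vector_mult_add_rdistrib algebra_simps)
    have zx: "z = (Mi ** R) *v x"
      unfolding z_def y_def by (simp flip: IG add: matrix_vector_mult_diff_rdistrib)
    have Msymt: "transpose M = M" using Msym sym_pd_def by blast
    have Asymt: "transpose A = A" using A sym_psd_def by blast
    have Rsymt: "transpose R = R" using R sym_pd_def by blast
    have "Q x = Q y + 2 * (y \<bullet> (M *v z)) + Q z"
      unfolding Q_def
      using sym_inner[OF Msymt, of z y]
      by (simp add: z_def matrix_vector_mult_diff_distrib inner_diff_left inner_diff_right algebra_simps)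
    moreover have "y \<bullet> (M *v z) = y \<bullet> (R *v y) + z \<bullet> (A *v z)"
    proof -
      have "y \<bullet> (M *v z) = y \<bullet> (A *v z) + y \<bullet> (R *v z)"
        by (simp add: M_def matrix_vector_mult_add_rdistrib inner_add_right)
      also have "y \<bullet> (R *v z) = z \<bullet> (R *v y)" by (rule sym_inner[OF Rsymt])
      also have "\<dots> = z \<bullet> (A *v z)" by (simp add: Az)
      finally show ?thesis by (simp add: Az)
    qed
    moreover have "y \<bullet> (R *v y) \<ge> 0" using R unfolding sym_pd_def
      by (metis inner_zero_left less_eq_real_def matrix_vector_mult_0_right)
    moreover have "z \<bullet> (A *v z) \<ge> 0" using A unfolding sym_psd_def by blast
    ultimately have 1: "Q y \<le> Q x - Q z" by linarith
    have "Q z \<ge> c * (b * norm x)^2"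
    proof -
      have "(b * norm x)^2 \<le> norm z ^ 2" using b zx
        by (metis b(1) norm_ge_zero power_mono zero_le_mult_iff less_imp_le)
      hence "c * (b * norm x)^2 \<le> c * norm z ^ 2" using c(1) by simp
      then show ?thesis using c(2)[of z] by linarith
    qed
    moreover have "c * (b * norm x)^2 \<ge> mu * Q x"
    proof -
      have "mu * Q x \<le> mu * (K * norm x ^ 2)" using K(2)[of x] mu by simp
      also have "\<dots> = c * (b * norm x)^2" using K(1) by (simp add: mu_def power_mult_distrib)
      finally show ?thesis .
    qed
    ultimately have "Q y \<le> (1 - mu) * Q x" using 1 by (simp add: algebra_simps)
    also have "\<dots> \<le> lam * Q x" using Qnn[of x] by (simp add: lam_def mult_right_mono)
    finally show ?thesis by (simp add: y_def)
  qed
  have pw: "Q (mat_pow G k *v x) \<le> lam ^ k * Q x" for k x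
  proof (induction k)
    case 0 then show ?case by (simp add: matrix_vector_mul_lid)
  next
    case (Suc k)
    have "Q (mat_pow G (Suc k) *v x) \<le> lam * Q (mat_pow G k *v x)"
      unfolding mat_pow_Suc_vec by (rule step)
    also have "\<dots> \<le> lam * (lam ^ k * Q x)" using Suc lam by (simp add: mult_left_mono)
    finally show ?case by simp
  qed
  have vec0: "(\<lambda>k. mat_pow G k *v x) \<longlonglongrightarrow> 0" for x
  proof (rule Lim_null_comparison)
    show "\<forall>\<^sub>F k in sequentially. norm (mat_pow G k *v x) \<le> sqrt (lam ^ k * (Q x / c))"
    proof (intro always_eventually allI)
      fix k
      have "c * norm (mat_pow G k *v x) ^ 2 \<le> lam ^ k * Q x" using c(2) pw order_trans by blast
      hence "norm (mat_pow G k *v x) ^ 2 \<le> lam ^ k * (Q x / c)" using c(1)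
        by (simp add: field_simps)
      then show "norm (mat_pow G k *v x) \<le> sqrt (lam ^ k * (Q x / c))"
        by (simp add: real_le_rsqrt)
    qed
    have "(\<lambda>k. lam ^ k * (Q x / c)) \<longlonglongrightarrow> 0 * (Q x / c)"
      by (intro tendsto_intros LIMSEQ_power_zero) (use lam in auto)
    then show "(\<lambda>k. sqrt (lam ^ k * (Q x / c))) \<longlonglongrightarrow> 0"
      using tendsto_real_sqrt by fastforce
  qed
  show ?thesis
  proof (rule vec_tendstoI, rule vec_tendstoI)
    fix i j
    have e: "(mat_pow G k *v axis j 1) $ i = mat_pow G k $ i $ j" for k
      by (simp add: matrix_vector_mult_def axis_def if_distrib if_distribR cong: if_cong)
    show "((\<lambda>k. mat_pow G k $ i $ j) \<longlongrightarrow> 0 $ i $ j) sequentially"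
      using tendsto_vec_nth[OF vec0[of "axis j 1"], of i] by (simp add: e)
  qed
qed


theorem theorem3:
  fixes H :: "real^'n^'N" and R :: "real^'n^'n"
  assumes "sym_psd (transpose H ** H)"
    and "sym_pd R"
  shows "(\<lambda>c. moore_penrose_pinv (transpose H ** H)
            - matrix_inv (transpose H ** H + R) **
              (\<Sum>i\<in>{0..c}. mat_pow (transpose H ** H ** matrix_inv (transpose H ** H + R)) i))
         \<longlonglongrightarrow> moore_penrose_pinv (transpose H ** H) - matrix_inv R"
proof -
  define A where "A = transpose H ** H"
  define M where "M = A + R"
  define Mi where "Mi = matrix_inv M"
  define Ri where "Ri = matrix_inv R"
  define G where "G = Mi ** A"
  define F where "F = A ** Mi"
  have Apsd: "sym_psd A" using assms(1) by (simp add: A_def)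
  have Msym: "sym_pd M" using Apsd assms(2) unfolding M_def sym_pd_def sym_psd_def
    by (auto simp: transpose_add' matrix_vector_mult_add_rdistrib inner_add_right add_nonneg_pos)
  note MMi = inv_props[OF pd_invertible[OF Msym], folded Mi_def]
  note RRi = inv_props[OF pd_invertible[OF assms(2)], folded Ri_def]
  have Gto: "(\<lambda>k. mat_pow G k) \<longlonglongrightarrow> 0"
    using pow_tendsto_zero[OF Apsd assms(2)] unfolding G_def Mi_def M_def .
  have comm: "Mi ** mat_pow F k = mat_pow G k ** Mi" for k
  proof (induction k)
    case 0 then show ?case by simp
  next
    case (Suc k)
    have "Mi ** mat_pow F (Suc k) = (Mi ** A) ** (Mi ** mat_pow F k)"
      by (simp add: F_def matrix_mul_assoc)
    also have "\<dots> = mat_pow G (Suc k) ** Mi" using Suc by (simp add: G_def matrix_mul_assoc)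
    finally show ?case .
  qed
  have key: "Ri ** M ** (mat 1 - G) = mat 1"
  proof -
    have "Ri ** M ** (mat 1 - G) = Ri ** M - Ri ** (M ** Mi) ** A"
      by (simp add: mm_ldiff G_def matrix_mul_assoc)
    also have "\<dots> = Ri ** (M - A)" by (simp add: MMi mm_ldiff)
    also have "\<dots> = mat 1" by (simp add: M_def RRi)
    finally show ?thesis .
  qed
  have closed: "Mi ** (\<Sum>i\<in>{0..c}. mat_pow F i) = Ri - Ri ** M ** mat_pow G (Suc c) ** Mi" for c
  proof (induction c)
    case 0
    have "Ri ** M ** G ** Mi = Ri ** A ** Mi"
      by (simp add: G_def MMi flip: matrix_mul_assoc) (simp add: matrix_mul_assoc MMi)
    moreover have "Ri = Ri ** M ** Mi" by (simp add: MMi flip: matrix_mul_assoc)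
    ultimately have "Ri - Ri ** M ** G ** Mi = Ri ** M ** Mi - Ri ** A ** Mi" by simp
    also have "\<dots> = Ri ** (M - A) ** Mi" by (simp add: mm_ldiff mm_rdiff)
    also have "\<dots> = Mi" by (simp add: M_def RRi)
    finally show ?case by simp
  next
    case (Suc c)
    have "Mi ** (\<Sum>i\<in>{0..Suc c}. mat_pow F i) = Mi ** (\<Sum>i\<in>{0..c}. mat_pow F i) + Mi ** mat_pow F (Suc c)"
      by (simp add: matrix_add_ldistrib)
    also have "\<dots> = Ri - Ri ** M ** mat_pow G (Suc c) ** Mi + mat_pow G (Suc c) ** Mi"
      using Suc comm[of "Suc c"] by (simp del: mat_pow.simps)
    also have "mat_pow G (Suc c) ** Mi = Ri ** M ** (mat 1 - G) ** mat_pow G (Suc c) ** Mi"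
      by (simp add: key)
    also have "Ri ** M ** (mat 1 - G) ** mat_pow G (Suc c) ** Mi
        = Ri ** M ** mat_pow G (Suc c) ** Mi - Ri ** M ** mat_pow G (Suc (Suc c)) ** Mi"
      by (simp add: mm_ldiff mm_rdiff matrix_mul_assoc)
    finally show ?case by simp
  qed
  have lim: "(\<lambda>c. Ri ** M ** mat_pow G (Suc c) ** Mi) \<longlonglongrightarrow> 0"
    using mat_tendsto_mult[OF LIMSEQ_Suc[OF Gto], of "Ri ** M" Mi] by simp
  have "(\<lambda>c. moore_penrose_pinv A - (Ri - Ri ** M ** mat_pow G (Suc c) ** Mi))
        \<longlonglongrightarrow> moore_penrose_pinv A - (Ri - 0)"
    by (intro tendsto_intros lim)
  then show ?thesis
    unfolding A_def[symmetric] M_def[symmetric] Mi_def[symmetric] F_def[symmetric] closed Ri_def[symmetric]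
    by simp
qed

end
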